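(* Let $\Gamma$ be a weighted digraph with vertex set $\{1,\dots,n\}$, $n>1$, without loops and with strictly positive arc weights, with Laplacian matrix $L$ and matrices of in-forests $Q_k$. For $k\ge1$ let $\Gamma_k$ be the weighted digraph on vertex set $\{1,\dots,n\}$ that has an arc $(i,j)$, $j\neq i$, exactly when $q^k_{ij}>0$, this arc having weight $q^k_{ij}$. Then for every $k=0,1,2,\dots$, $LQ_k$ is the Laplacian matrix of $\Gamma_{k+1}$.
   Context: $W=(w_{ij})$ is the matrix of arc weights ($w_{ij}>0$ iff there is an arc $i\to j$, else $0$). The Laplacian of a weighted digraph with weights $w_{ij}$ is $L=(\ell_{ij})$ with $\ell_{ij}=-w_{ij}$ for $j\ne i$, $\ell_{ii}=\sum_{k\ne i}w_{ik}$. The weight of a subgraph is the product of its arc weights (1 if no arcs); the weight of a set of subgraphs is the sum of their weights (0 for the empty set). A converging tree is a weakly connected digraph with one vertex (the root) of outdegree 0 and all others of outdegree 1; an in-forest is a spanning subgraph of $\Gamma$ whose weak components are converging trees. $Q_k=(q^k_{ij})$ where $q^k_{ij}$ is the total weight of in-forests of $\Gamma$ with $k$ arcs in which $i$ lies in a tree rooted at $j$. *)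

theory Defs
  imports Complex_Main
begin

definition arcs :: "nat \<Rightarrow> (nat \<Rightarrow> nat \<Rightarrow> real) \<Rightarrow> (nat \<times> nat) set" where
  "arcs n w = {(i, j). i \<in> {1..n} \<and> j \<in> {1..n} \<and> w i j > 0}"

definition laplacian :: "nat \<Rightarrow> (nat \<Rightarrow> nat \<Rightarrow> real) \<Rightarrow> nat \<Rightarrow> nat \<Rightarrow> real" where
  "laplacian n w i j = (if i = j then (\<Sum>k\<in>{1..n} - {i}. w i k) else - w i j)"

definition outnbrs :: "(nat \<times> nat) set \<Rightarrow> nat \<Rightarrow> nat set" where
  "outnbrs A v = {u. (v, u) \<in> A}"

definition converging_tree :: "nat set \<Rightarrow> (nat \<times> nat) set \<Rightarrow> bool" where
  "converging_tree C A \<longleftrightarrow> A \<subseteq> C \<times> C \<and> C \<noteq> {} \<and>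
     (\<forall>x\<in>C. \<forall>y\<in>C. (x, y) \<in> (A \<union> A\<inverse>)\<^sup>*) \<and>
     (\<exists>!r. r \<in> C \<and> card (outnbrs A r) = 0) \<and>
     (\<forall>v\<in>C. card (outnbrs A v) = 0 \<or> card (outnbrs A v) = 1)"

definition wcomp :: "(nat \<times> nat) set \<Rightarrow> nat \<Rightarrow> nat set" where
  "wcomp F i = {j. (i, j) \<in> (F \<union> F\<inverse>)\<^sup>*}"

definition in_forest :: "nat \<Rightarrow> (nat \<Rightarrow> nat \<Rightarrow> real) \<Rightarrow> (nat \<times> nat) set \<Rightarrow> bool" where
  "in_forest n w F \<longleftrightarrow> F \<subseteq> arcs n w \<and>
     (\<forall>i\<in>{1..n}. converging_tree (wcomp F i) (F \<inter> (wcomp F i \<times> wcomp F i)))"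

definition rooted_at :: "(nat \<times> nat) set \<Rightarrow> nat \<Rightarrow> nat \<Rightarrow> bool" where
  "rooted_at F i j \<longleftrightarrow> j \<in> wcomp F i \<and> outnbrs F j = {}"

definition forest_matrix :: "nat \<Rightarrow> (nat \<Rightarrow> nat \<Rightarrow> real) \<Rightarrow> nat \<Rightarrow> nat \<Rightarrow> nat \<Rightarrow> real" where
  "forest_matrix n w k i j =
     (\<Sum>F\<in>{F. in_forest n w F \<and> card F = k \<and> rooted_at F i j}. \<Prod>(a, b)\<in>F. w a b)"

definition gamma_weights :: "nat \<Rightarrow> (nat \<Rightarrow> nat \<Rightarrow> real) \<Rightarrow> nat \<Rightarrow> nat \<Rightarrow> nat \<Rightarrow> real" where
  "gamma_weights n w k i j =
     (if j \<noteq> i \<and> forest_matrix n w k i j > 0 then forest_matrix n w k i j else 0)"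

end

theory Submission imports Defs begin

definition sinkp :: "(nat \<times> nat) set \<Rightarrow> nat \<Rightarrow> bool" where
  "sinkp F x \<longleftrightarrow> (\<forall>y. (x, y) \<notin> F)"
definition funcp :: "(nat \<times> nat) set \<Rightarrow> bool" where
  "funcp F \<longleftrightarrow> (\<forall>x y z. (x, y) \<in> F \<longrightarrow> (x, z) \<in> F \<longrightarrow> y = z)"
definition okf :: "(nat \<times> nat) set \<Rightarrow> bool" where
  "okf F \<longleftrightarrow> funcp F \<and> (\<forall>x. \<exists>r. (x, r) \<in> F\<^sup>* \<and> sinkp F r)"
definition rootf :: "(nat \<times> nat) set \<Rightarrow> nat \<Rightarrow> nat" where
  "rootf F x = (THE r. (x, r) \<in> F\<^sup>* \<and> sinkp F r)"

lemma sink_reach_eq: "sinkp F a \<Longrightarrow> (a, b) \<in> F\<^sup>* \<Longrightarrow> b = a"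
  by (erule converse_rtranclE) (auto simp: sinkp_def)

lemma func_chain:
  assumes "funcp F" "(x, a) \<in> F\<^sup>*" "(x, b) \<in> F\<^sup>*"
  shows "(a, b) \<in> F\<^sup>* \<or> (b, a) \<in> F\<^sup>*"
  using assms(2,3)
proof (induction rule: rtrancl_induct)
  case base
  then show ?case by simp
next
  case (step y z)
  from step.IH[OF step.prems] show ?case
  proof
    assume "(y, b) \<in> F\<^sup>*"
    then show ?case
    proof (cases rule: converse_rtranclE)
      case base
      then show ?thesis using step.hyps(2) by auto
    next
      case (step d)
      then have "d = z" using assms(1) \<open>(y, z) \<in> F\<close> unfolding funcp_def by blast
      then show ?thesis using step by auto
    qed
  next
    assume "(b, y) \<in> F\<^sup>*"
    then show ?case using step.hyps(2) by (meson rtrancl.rtrancl_into_rtrancl)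
  qed
qed

lemma func_sink_unique:
  assumes "funcp F" "(x, a) \<in> F\<^sup>*" "sinkp F a" "(x, b) \<in> F\<^sup>*" "sinkp F b"
  shows "a = b"
  using func_chain[OF assms(1,2,4)] sink_reach_eq assms(3,5) by metis

lemma root_spec:
  assumes "okf F"
  shows "(x, rootf F x) \<in> F\<^sup>* \<and> sinkp F (rootf F x)"
proof -
  have "\<exists>!r. (x, r) \<in> F\<^sup>* \<and> sinkp F r"
    using assms func_sink_unique unfolding okf_def by metis
  then show ?thesis unfolding rootf_def by (rule theI')
qed

lemma root_eq:
  assumes "okf F" "(x, r) \<in> F\<^sup>*" "sinkp F r"
  shows "rootf F x = r"
  using root_spec[OF assms(1), of x] assms func_sink_unique unfolding okf_def by metis

lemma root_step:
  assumes "okf F" "(x, y) \<in> F\<^sup>*"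
  shows "rootf F x = rootf F y"
  using root_spec[OF assms(1), of y] assms root_eq by (meson rtrancl_trans)

lemma undirected_root:
  assumes "funcp F" "A \<subseteq> F" "(a, b) \<in> (A \<union> A\<inverse>)\<^sup>*" "(a, r) \<in> F\<^sup>*" "sinkp F r"
  shows "(b, r) \<in> F\<^sup>*"
  using assms(3)
proof (induction rule: rtrancl_induct)
  case base
  then show ?case using assms(4) .
next
  case (step y z)
  show ?case
  proof (cases "(z, y) \<in> F")
    case True
    then show ?thesis using step.IH by (meson converse_rtrancl_into_rtrancl)
  next
    case False
    then have yz: "(y, z) \<in> F" using step.hyps(2) assms(2) by auto
    from step.IH show ?thesis
    proof (cases rule: converse_rtranclE)
      case base
      then show ?thesis using yz assms(5) unfolding sinkp_def by auto
    next
      case (step d)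
      then have "d = z" using assms(1) yz unfolding funcp_def by blast
      then show ?thesis using step by auto
    qed
  qed
qed

lemma acyc:
  assumes "okf F" "(x, p) \<in> F"
  shows "(p, x) \<notin> F\<^sup>*"
proof
  assume px: "(p, x) \<in> F\<^sup>*"
  have hf: "funcp F" using assms(1) unfolding okf_def by auto
  have hback: "(y, x) \<in> F\<^sup>*" if "(x, y) \<in> F\<^sup>*" for y
    using that
  proof (induction rule: rtrancl_induct)
    case base
    then show ?case by simp
  next
    case (step y z)
    show ?case
    proof (cases "y = x")
      case True
      then have "z = p" using hf assms(2) step.hyps(2) unfolding funcp_def by blast
      then show ?thesis using px by simp
    next
      case False
      from step.IH show ?thesis
      proof (cases rule: converse_rtranclE)
        case base
        then show ?thesis using False by simp
      next
        case (step d)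
        then have "d = z" using hf \<open>(y, z) \<in> F\<close> unfolding funcp_def by blast
        then show ?thesis using step by auto
      qed
    qed
  qed
  have r: "(x, rootf F x) \<in> F\<^sup>*" "sinkp F (rootf F x)" using root_spec[OF assms(1)] by auto
  then have "rootf F x = x" using hback[OF r(1)] sink_reach_eq by metis
  then show False using r(2) assms(2) unfolding sinkp_def by metis
qed

lemma first_arrival:
  assumes "(x, y) \<in> F\<^sup>*"
  shows "(x, y) \<in> (F - {(i, p)})\<^sup>* \<or> (x, i) \<in> (F - {(i, p)})\<^sup>*"
  using assms
proof (induction rule: rtrancl_induct)
  case base
  then show ?case by simp
next
  case (step y z)
  show ?case
  proof (cases "(y, z) = (i, p)")
    case True
    then show ?thesis using step.IH by auto
  next
    case False
    then have "(y, z) \<in> F - {(i, p)}" using step.hyps(2) by auto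
    then show ?thesis using step.IH by (meson rtrancl.rtrancl_into_rtrancl)
  qed
qed

lemma remove_ok:
  assumes "okf F" "(i, p) \<in> F"
  shows "okf (F - {(i, p)})" "sinkp (F - {(i, p)}) i"
proof -
  have hf: "funcp F" using assms(1) unfolding okf_def by auto
  show sk: "sinkp (F - {(i, p)}) i"
    using hf assms(2) unfolding sinkp_def funcp_def by blast
  show "okf (F - {(i, p)})"
    unfolding okf_def
  proof (intro conjI allI)
    show "funcp (F - {(i, p)})" using hf unfolding funcp_def by blast
  next
    fix x
    have r: "(x, rootf F x) \<in> F\<^sup>*" "sinkp F (rootf F x)" using root_spec[OF assms(1)] by auto
    have "sinkp (F - {(i, p)}) (rootf F x)" using r(2) unfolding sinkp_def by blast
    then show "\<exists>r. (x, r) \<in> (F - {(i, p)})\<^sup>* \<and> sinkp (F - {(i, p)}) r"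
      using first_arrival[OF r(1), of i p] sk by blast
  qed
qed

lemma insert_ok:
  assumes "okf F" "sinkp F i" "(m, i) \<notin> F\<^sup>*"
  shows "okf (insert (i, m) F)"
  unfolding okf_def
proof (intro conjI allI)
  have hf: "funcp F" using assms(1) unfolding okf_def by auto
  show "funcp (insert (i, m) F)" using hf assms(2) unfolding funcp_def sinkp_def by blast
next
  fix x
  let ?G = "insert (i, m) F"
  have mono: "F\<^sup>* \<subseteq> ?G\<^sup>*" by (rule rtrancl_mono) auto
  have r: "(x, rootf F x) \<in> F\<^sup>*" "sinkp F (rootf F x)" using root_spec[OF assms(1)] by auto
  show "\<exists>r. (x, r) \<in> ?G\<^sup>* \<and> sinkp ?G r"
  proof (cases "rootf F x = i")
    case False
    then have "sinkp ?G (rootf F x)" using r(2) unfolding sinkp_def by auto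
    then show ?thesis using r(1) mono by blast
  next
    case True
    have s: "(m, rootf F m) \<in> F\<^sup>*" "sinkp F (rootf F m)" using root_spec[OF assms(1)] by auto
    have "rootf F m \<noteq> i" using s assms(3) by auto
    then have "sinkp ?G (rootf F m)" using s(2) unfolding sinkp_def by auto
    moreover have "(x, rootf F m) \<in> ?G\<^sup>*"
    proof -
      have "(x, i) \<in> ?G\<^sup>*" using r(1) True mono by auto
      moreover have "(m, rootf F m) \<in> ?G\<^sup>*" using s(1) mono by auto
      ultimately show ?thesis
        by (meson converse_rtrancl_into_rtrancl insertI1 rtrancl_trans)
    qed
    ultimately show ?thesis by blast
  qed
qed

lemma root_remove:
  assumes "okf F" "(i, p) \<in> F" "(x, i) \<notin> F\<^sup>*"
  shows "rootf (F - {(i, p)}) x = rootf F x"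
proof -
  have r: "(x, rootf F x) \<in> F\<^sup>*" "sinkp F (rootf F x)" using root_spec[OF assms(1)] by auto
  have mono: "(F - {(i, p)})\<^sup>* \<subseteq> F\<^sup>*" by (rule rtrancl_mono) auto
  have "(x, rootf F x) \<in> (F - {(i, p)})\<^sup>*"
    using first_arrival[OF r(1), of i p] assms(3) mono by blast
  moreover have "sinkp (F - {(i, p)}) (rootf F x)" using r(2) unfolding sinkp_def by blast
  ultimately show ?thesis using root_eq remove_ok[OF assms(1,2)] by blast
qed

lemma root_insert:
  assumes "okf F" "sinkp F i" "(m, i) \<notin> F\<^sup>*" "(x, i) \<notin> F\<^sup>*"
  shows "rootf (insert (i, m) F) x = rootf F x"
proof -
  let ?G = "insert (i, m) F"
  have mono: "F\<^sup>* \<subseteq> ?G\<^sup>*" by (rule rtrancl_mono) auto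
  have r: "(x, rootf F x) \<in> F\<^sup>*" "sinkp F (rootf F x)" using root_spec[OF assms(1)] by auto
  have "rootf F x \<noteq> i" using r assms(4) by auto
  then have "sinkp ?G (rootf F x)" using r(2) unfolding sinkp_def by auto
  then show ?thesis using root_eq[OF insert_ok[OF assms(1-3)]] r(1) mono by blast
qed

lemma root_insert_i:
  assumes "okf F" "sinkp F i" "(m, i) \<notin> F\<^sup>*"
  shows "rootf (insert (i, m) F) i = rootf F m"
proof -
  let ?G = "insert (i, m) F"
  have ok: "okf ?G" using insert_ok[OF assms] .
  have "rootf ?G i = rootf ?G m" using root_step[OF ok, of i m] by auto
  also have "\<dots> = rootf F m" using root_insert[OF assms assms(3)] .
  finally show ?thesis .
qed


lemma arcs_sub: "arcs n w \<subseteq> {1..n} \<times> {1..n}"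
  unfolding arcs_def by auto

lemma wcomp_self: "i \<in> wcomp F i"
  unfolding wcomp_def by auto

lemma wcomp_closed: "x \<in> wcomp F i \<Longrightarrow> (x, y) \<in> F \<Longrightarrow> y \<in> wcomp F i"
  unfolding wcomp_def by (auto intro: rtrancl_into_rtrancl)

lemma outnbrs_restr:
  "x \<in> wcomp F i \<Longrightarrow> outnbrs (F \<inter> (wcomp F i \<times> wcomp F i)) x = outnbrs F x"
  unfolding outnbrs_def using wcomp_closed by blast

lemma outnbrs_finite: "F \<subseteq> arcs n w \<Longrightarrow> finite (outnbrs F x)"
proof -
  assume "F \<subseteq> arcs n w"
  then have "outnbrs F x \<subseteq> {1..n}" using arcs_sub unfolding outnbrs_def by blast
  then show ?thesis using finite_subset by blast
qed

lemma sink_iff_card: "F \<subseteq> arcs n w \<Longrightarrow> card (outnbrs F x) = 0 \<longleftrightarrow> sinkp F x"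
  using outnbrs_finite[of F n w x] unfolding sinkp_def outnbrs_def by auto

lemma in_forest_imp:
  assumes "in_forest n w F"
  shows "F \<subseteq> arcs n w \<and> okf F"
proof -
  have sub: "F \<subseteq> arcs n w" using assms unfolding in_forest_def by auto
  have FV: "F \<subseteq> {1..n} \<times> {1..n}" using sub arcs_sub by blast
  have ct: "\<And>i. i \<in> {1..n} \<Longrightarrow> converging_tree (wcomp F i) (F \<inter> (wcomp F i \<times> wcomp F i))"
    using assms unfolding in_forest_def by auto
  have hf: "funcp F"
    unfolding funcp_def
  proof (intro allI impI)
    fix x y z assume xy: "(x, y) \<in> F" and xz: "(x, z) \<in> F"
    have xV: "x \<in> {1..n}" using xy FV by auto
    let ?C = "wcomp F x"
    have c: "card (outnbrs F x) = 0 \<or> card (outnbrs F x) = 1"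
      using ct[OF xV] outnbrs_restr[OF wcomp_self[of x F]] wcomp_self[of x F]
      unfolding converging_tree_def by metis
    have yz: "y \<in> outnbrs F x" "z \<in> outnbrs F x" using xy xz unfolding outnbrs_def by auto
    have fin: "finite (outnbrs F x)" using outnbrs_finite[OF sub] .
    show "y = z"
    proof (cases "card (outnbrs F x) = 0")
      case True
      then show ?thesis using fin yz by auto
    next
      case False
      then have "card (outnbrs F x) = 1" using c by auto
      then obtain a where "outnbrs F x = {a}" by (meson card_1_singletonE)
      then show ?thesis using yz by auto
    qed
  qed
  have "\<exists>r. (x, r) \<in> F\<^sup>* \<and> sinkp F r" for x
  proof (cases "x \<in> {1..n}")
    case False
    then have "sinkp F x" using FV unfolding sinkp_def by auto
    then show ?thesis by blast
  next
    case True
    let ?C = "wcomp F x"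
    let ?A = "F \<inter> (?C \<times> ?C)"
    have cti: "converging_tree ?C ?A" using ct[OF True] .
    then obtain r where r: "r \<in> ?C" "card (outnbrs ?A r) = 0"
      unfolding converging_tree_def by metis
    have sr: "sinkp F r" using r outnbrs_restr[OF r(1)] sink_iff_card[OF sub] by metis
    have "(r, x) \<in> (?A \<union> ?A\<inverse>)\<^sup>*"
      using cti r(1) wcomp_self[of x F] unfolding converging_tree_def by blast
    then have "(x, r) \<in> F\<^sup>*"
      using undirected_root[OF hf, of ?A r x r] sr by auto
    then show ?thesis using sr by blast
  qed
  then show ?thesis using sub hf unfolding okf_def by blast
qed

lemma sym_path: "(x, y) \<in> (A \<union> A\<inverse>)\<^sup>* \<Longrightarrow> (y, x) \<in> (A \<union> A\<inverse>)\<^sup>*"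
proof -
  assume "(x, y) \<in> (A \<union> A\<inverse>)\<^sup>*"
  then have "(y, x) \<in> ((A \<union> A\<inverse>)\<inverse>)\<^sup>*" by (simp add: rtrancl_converse)
  moreover have "(A \<union> A\<inverse>)\<inverse> = A \<union> A\<inverse>" by auto
  ultimately show ?thesis by simp
qed

lemma imp_in_forest:
  assumes sub: "F \<subseteq> arcs n w" and ok: "okf F"
  shows "in_forest n w F"
  unfolding in_forest_def
proof (intro conjI ballI)
  show "F \<subseteq> arcs n w" using sub .
next
  fix i assume iV: "i \<in> {1..n}"
  have hf: "funcp F" using ok unfolding okf_def by auto
  let ?C = "wcomp F i"
  let ?A = "F \<inter> (?C \<times> ?C)"
  have pin: "(i, b) \<in> (?A \<union> ?A\<inverse>)\<^sup>*" if "(i, b) \<in> (F \<union> F\<inverse>)\<^sup>*" for b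
    using that
  proof (induction rule: rtrancl_induct)
    case base
    then show ?case by simp
  next
    case (step y z)
    have "y \<in> ?C" "z \<in> ?C" using step.hyps unfolding wcomp_def
      by (auto intro: rtrancl_into_rtrancl)
    then have "(y, z) \<in> ?A \<union> ?A\<inverse>" using step.hyps(2) by auto
    then show ?case using step.IH by (meson rtrancl.rtrancl_into_rtrancl)
  qed
  have conn: "\<forall>x\<in>?C. \<forall>y\<in>?C. (x, y) \<in> (?A \<union> ?A\<inverse>)\<^sup>*"
  proof (intro ballI)
    fix x y assume "x \<in> ?C" "y \<in> ?C"
    then have "(i, x) \<in> (?A \<union> ?A\<inverse>)\<^sup>*" "(i, y) \<in> (?A \<union> ?A\<inverse>)\<^sup>*"
      using pin unfolding wcomp_def by auto
    then show "(x, y) \<in> (?A \<union> ?A\<inverse>)\<^sup>*" using sym_path by (meson rtrancl_trans)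
  qed
  have sk: "card (outnbrs ?A v) = 0 \<longleftrightarrow> sinkp F v" if "v \<in> ?C" for v
    using outnbrs_restr[OF that] sink_iff_card[OF sub] by metis
  have rs: "(i, rootf F i) \<in> F\<^sup>*" "sinkp F (rootf F i)" using root_spec[OF ok] by auto
  have rC: "rootf F i \<in> ?C"
    using rs(1) rtrancl_mono[of F "F \<union> F\<inverse>"] unfolding wcomp_def by auto
  have uniq: "v = rootf F i" if "v \<in> ?C" "sinkp F v" for v
  proof -
    have "(i, v) \<in> (F \<union> F\<inverse>)\<^sup>*" using that(1) unfolding wcomp_def by auto
    then have "(v, rootf F i) \<in> F\<^sup>*" using undirected_root[OF hf, of F i v] rs by auto
    then show ?thesis using sink_reach_eq that(2) by metis
  qed
  have ex1: "\<exists>!r. r \<in> ?C \<and> card (outnbrs ?A r) = 0"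
    using rC rs(2) sk uniq by metis
  have deg: "\<forall>v\<in>?C. card (outnbrs ?A v) = 0 \<or> card (outnbrs ?A v) = 1"
  proof
    fix v assume vC: "v \<in> ?C"
    show "card (outnbrs ?A v) = 0 \<or> card (outnbrs ?A v) = 1"
    proof (cases "outnbrs F v = {}")
      case True
      then show ?thesis using outnbrs_restr[OF vC] by simp
    next
      case False
      then obtain y where y: "y \<in> outnbrs F v" by auto
      then have "outnbrs F v = {y}" using hf unfolding outnbrs_def funcp_def by blast
      then show ?thesis using outnbrs_restr[OF vC] by simp
    qed
  qed
  show "converging_tree ?C ?A"
    unfolding converging_tree_def using conn ex1 deg wcomp_self[of i F] by blast
qed

lemma in_forest_iff: "in_forest n w F \<longleftrightarrow> F \<subseteq> arcs n w \<and> okf F"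
  using in_forest_imp imp_in_forest by blast

lemma rooted_iff:
  assumes ok: "okf F"
  shows "rooted_at F x j \<longleftrightarrow> rootf F x = j"
proof
  assume "rooted_at F x j"
  then have a: "(x, j) \<in> (F \<union> F\<inverse>)\<^sup>*" "sinkp F j"
    unfolding rooted_at_def wcomp_def outnbrs_def sinkp_def by auto
  have hf: "funcp F" using ok unfolding okf_def by auto
  have rs: "(x, rootf F x) \<in> F\<^sup>*" "sinkp F (rootf F x)" using root_spec[OF ok] by auto
  have "(j, rootf F x) \<in> F\<^sup>*" using undirected_root[OF hf, of F x j] a rs by auto
  then show "rootf F x = j" using sink_reach_eq a(2) by metis
next
  assume "rootf F x = j"
  then have rs: "(x, j) \<in> F\<^sup>*" "sinkp F j" using root_spec[OF ok, of x] by auto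
  then have "(x, j) \<in> (F \<union> F\<inverse>)\<^sup>*" using rtrancl_mono[of F "F \<union> F\<inverse>"] by auto
  then show "rooted_at F x j"
    using rs(2) unfolding rooted_at_def wcomp_def outnbrs_def sinkp_def by auto
qed

lemma reach_in_V:
  assumes "F \<subseteq> arcs n w" "x \<in> {1..n}" "(x, y) \<in> F\<^sup>*"
  shows "y \<in> {1..n}"
  using assms(3,2)
proof (induction rule: rtrancl_induct)
  case base
  then show ?case by simp
next
  case (step y z)
  then show ?case using assms(1) arcs_sub by blast
qed


definition Sk :: "nat \<Rightarrow> (nat \<Rightarrow> nat \<Rightarrow> real) \<Rightarrow> nat \<Rightarrow> (nat \<times> nat) set set" where
  "Sk n w k = {F. in_forest n w F \<and> card F = k}"
definition Wt :: "(nat \<Rightarrow> nat \<Rightarrow> real) \<Rightarrow> (nat \<times> nat) set \<Rightarrow> real" where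
  "Wt w F = (\<Prod>(a, b)\<in>F. w a b)"
definition parf :: "(nat \<times> nat) set \<Rightarrow> nat \<Rightarrow> nat" where
  "parf F i = (THE p. (i, p) \<in> F)"
definition Tm :: "(nat \<Rightarrow> nat \<Rightarrow> real) \<Rightarrow> nat \<Rightarrow> nat \<Rightarrow> (nat \<times> nat) set \<times> nat \<Rightarrow> real" where
  "Tm w i j p = (case p of (F, m) \<Rightarrow>
     w i m * Wt w F * (of_bool (rootf F i = j) - of_bool (rootf F m = j)))"

lemma parf_eq: "okf F \<Longrightarrow> (i, p) \<in> F \<Longrightarrow> parf F i = p"
  unfolding parf_def okf_def funcp_def by blast

lemma parf_in: "okf F \<Longrightarrow> \<not> sinkp F i \<Longrightarrow> (i, parf F i) \<in> F"
  using parf_eq unfolding sinkp_def by blast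

lemma finite_arcs: "F \<subseteq> arcs n w \<Longrightarrow> finite F"
  using arcs_sub finite_subset by (metis finite_SigmaI finite_atLeastAtMost)

lemma finite_Sk: "finite (Sk n w k)"
proof -
  have "Sk n w k \<subseteq> Pow ({1..n} \<times> {1..n})"
    unfolding Sk_def using in_forest_iff arcs_sub by blast
  then show ?thesis by (rule finite_subset) auto
qed

lemma Sk_iff: "F \<in> Sk n w k \<longleftrightarrow> F \<subseteq> arcs n w \<and> okf F \<and> card F = k"
  unfolding Sk_def using in_forest_iff by blast

lemma q_eq: "forest_matrix n w k m j = (\<Sum>F\<in>Sk n w k. Wt w F * of_bool (rootf F m = j))"
proof -
  have "{F. in_forest n w F \<and> card F = k \<and> rooted_at F m j} = {F \<in> Sk n w k. rootf F m = j}"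
    unfolding Sk_def using in_forest_iff rooted_iff by blast
  then have "forest_matrix n w k m j = (\<Sum>F\<in>{F \<in> Sk n w k. rootf F m = j}. Wt w F)"
    unfolding forest_matrix_def Wt_def by simp
  also have "\<dots> = (\<Sum>F\<in>Sk n w k. if rootf F m = j then Wt w F else 0)"
    using finite_Sk by (rule sum.inter_filter)
  also have "\<dots> = (\<Sum>F\<in>Sk n w k. Wt w F * of_bool (rootf F m = j))"
    by (rule sum.cong) auto
  finally show ?thesis .
qed

lemma delta_sum: "finite A \<Longrightarrow> (\<Sum>m\<in>A. c * of_bool (r = m)) = (if r \<in> A then c else (0::real))"
  by (simp add: of_bool_def if_distrib sum.delta cong: if_cong)

lemma arc_facts:
  assumes "\<forall>i\<in>{1..n}. w i i = 0" "(a, b) \<in> arcs n w"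
  shows "a \<in> {1..n} \<and> b \<in> {1..n} \<and> w a b > 0 \<and> a \<noteq> b"
  using assms unfolding arcs_def by auto

lemma Wt_insert: "finite F \<Longrightarrow> (a, b) \<notin> F \<Longrightarrow> Wt w (insert (a, b) F) = w a b * Wt w F"
  unfolding Wt_def by simp

lemma Wt_remove: "finite F \<Longrightarrow> (a, b) \<in> F \<Longrightarrow> Wt w F = w a b * Wt w (F - {(a, b)})"
  unfolding Wt_def by (subst prod.remove) auto

lemma Wt_nonneg: "F \<subseteq> arcs n w \<Longrightarrow> Wt w F \<ge> 0"
  unfolding Wt_def arcs_def by (rule prod_nonneg) auto


definition phi :: "nat \<Rightarrow> (nat \<times> nat) set \<times> nat \<Rightarrow> (nat \<times> nat) set \<times> nat" where
  "phi i p = (case p of (F, m) \<Rightarrow> (insert (i, m) (F - {(i, parf F i)}), parf F i))"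

definition PC :: "nat \<Rightarrow> (nat \<Rightarrow> nat \<Rightarrow> real) \<Rightarrow> nat \<Rightarrow> nat \<Rightarrow> ((nat \<times> nat) set \<times> nat) set" where
  "PC n w k i = {(F, m). F \<in> Sk n w k \<and> m \<in> {1..n} - {i} \<and> w i m > 0 \<and>
       rootf F m \<noteq> rootf F i \<and> \<not> sinkp F i}"

definition PB :: "nat \<Rightarrow> (nat \<Rightarrow> nat \<Rightarrow> real) \<Rightarrow> nat \<Rightarrow> nat \<Rightarrow> ((nat \<times> nat) set \<times> nat) set" where
  "PB n w k i = {(F, m). F \<in> Sk n w k \<and> m \<in> {1..n} - {i} \<and> w i m > 0 \<and>
       rootf F m \<noteq> rootf F i \<and> sinkp F i}"

lemma root_diff_noreach:
  assumes "okf F" "rootf F m \<noteq> rootf F i"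
  shows "(m, i) \<notin> F\<^sup>*"
  using root_step[OF assms(1)] assms(2) by blast

lemma lemC:
  assumes diag: "\<forall>i\<in>{1..n}. w i i = 0" and iV: "i \<in> {1..n}"
    and Fm: "(F, m) \<in> PC n w k i"
  shows "phi i (F, m) \<in> PC n w k i \<and> phi i (phi i (F, m)) = (F, m)
         \<and> Tm w i j (phi i (F, m)) = - Tm w i j (F, m)"
proof -
  have F: "F \<subseteq> arcs n w" "okf F" "card F = k" and mV: "m \<in> {1..n}" "m \<noteq> i"
    and wm: "w i m > 0" and rmi: "rootf F m \<noteq> rootf F i" and ns: "\<not> sinkp F i"
    using Fm unfolding PC_def Sk_iff by auto
  define p where "p = parf F i"
  have ip: "(i, p) \<in> F" using parf_in[OF F(2) ns] p_def by simp
  have pf: "p \<in> {1..n} \<and> w i p > 0 \<and> i \<noteq> p"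
    using arc_facts[where n=n and w=w, OF diag] ip F(1) by blast
  define F0 where "F0 = F - {(i, p)}"
  define F' where "F' = insert (i, m) F0"
  have ok0: "okf F0" and sk0: "sinkp F0 i" using remove_ok[OF F(2) ip] F0_def by auto
  have mono0: "F0\<^sup>* \<subseteq> F\<^sup>*" unfolding F0_def by (rule rtrancl_mono) auto
  have mi: "(m, i) \<notin> F\<^sup>*" using root_diff_noreach[OF F(2) rmi] .
  then have mi0: "(m, i) \<notin> F0\<^sup>*" using mono0 by blast
  have okF': "okf F'" unfolding F'_def using insert_ok[OF ok0 sk0 mi0] .
  have fin: "finite F" using finite_arcs[OF F(1)] .
  have im0: "(i, m) \<notin> F0" using sk0 unfolding sinkp_def by auto
  have subF': "F' \<subseteq> arcs n w"
    unfolding F'_def F0_def using F(1) iV mV wm unfolding arcs_def by auto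
  have kpos: "k \<ge> 1" using F(3) fin ip by (metis One_nat_def Suc_leI card_gt_0_iff empty_iff)
  have cardF': "card F' = k"
  proof -
    have "card F0 = k - 1" unfolding F0_def using F(3) fin ip by simp
    moreover have "finite F0" unfolding F0_def using fin by simp
    ultimately show ?thesis unfolding F'_def using im0 kpos by simp
  qed
  have pi: "(p, i) \<notin> F\<^sup>*" using acyc[OF F(2) ip] .
  then have pi0: "(p, i) \<notin> F0\<^sup>*" using mono0 by blast
  have rp: "rootf F' p = rootf F i"
  proof -
    have "rootf F' p = rootf F0 p" unfolding F'_def using root_insert[OF ok0 sk0 mi0 pi0] .
    also have "\<dots> = rootf F p" unfolding F0_def using root_remove[OF F(2) ip pi] .
    also have "\<dots> = rootf F i" using root_step[OF F(2), of i p] ip by (metis r_into_rtrancl)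
    finally show ?thesis .
  qed
  have ri: "rootf F' i = rootf F m"
  proof -
    have "rootf F' i = rootf F0 m" unfolding F'_def using root_insert_i[OF ok0 sk0 mi0] .
    also have "\<dots> = rootf F m" unfolding F0_def using root_remove[OF F(2) ip mi] .
    finally show ?thesis .
  qed
  have nsF': "\<not> sinkp F' i" unfolding F'_def sinkp_def by auto
  have parF': "parf F' i = m" using parf_eq[OF okF'] unfolding F'_def by auto
  have ph: "phi i (F, m) = (F', p)" unfolding phi_def F'_def F0_def p_def by simp
  have in1: "(F', p) \<in> PC n w k i"
    unfolding PC_def Sk_iff using subF' okF' cardF' pf rp ri rmi nsF' by auto
  have hbk: "phi i (F', p) = (F, m)"
  proof -
    have "F' - {(i, m)} = F0" unfolding F'_def using im0 by auto
    moreover have "insert (i, p) F0 = F" unfolding F0_def using ip by auto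
    ultimately show ?thesis unfolding phi_def using parF' by simp
  qed
  have fin0: "finite F0" unfolding F0_def using fin by simp
  have W1: "Wt w F = w i p * Wt w F0" unfolding F0_def using Wt_remove[OF fin ip] .
  have W2: "Wt w F' = w i m * Wt w F0" unfolding F'_def using Wt_insert[OF fin0 im0] .
  have "Tm w i j (F', p) = - Tm w i j (F, m)"
    unfolding Tm_def using W1 W2 rp ri by (simp add: algebra_simps)
  then show ?thesis using ph in1 hbk by simp
qed

lemma sumC_zero:
  assumes diag: "\<forall>i\<in>{1..n}. w i i = 0" and iV: "i \<in> {1..n}"
  shows "sum (Tm w i j) (PC n w k i) = 0"
proof -
  have "sum (Tm w i j) (PC n w k i) = sum (\<lambda>p. - Tm w i j p) (PC n w k i)"
  proof (rule sum.reindex_bij_witness[where i = "phi i" and j = "phi i"])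
    fix a assume a: "a \<in> PC n w k i"
    obtain F m where "a = (F, m)" by (cases a)
    then show "phi i (phi i a) = a" "phi i a \<in> PC n w k i"
      "- Tm w i j (phi i a) = Tm w i j a"
      using lemC[where n=n and w=w and k=k and j=j and F=F and m=m, OF diag iV] a by auto
  next
    fix b assume b: "b \<in> PC n w k i"
    obtain F m where "b = (F, m)" by (cases b)
    then show "phi i (phi i b) = b" "phi i b \<in> PC n w k i"
      using lemC[where n=n and w=w and k=k and j=j and F=F and m=m, OF diag iV] b by auto
  qed
  also have "\<dots> = - sum (Tm w i j) (PC n w k i)" by (simp add: sum_negf)
  finally show ?thesis by simp
qed


definition Hs :: "nat \<Rightarrow> (nat \<Rightarrow> nat \<Rightarrow> real) \<Rightarrow> nat \<Rightarrow> nat \<Rightarrow> (nat \<times> nat) set set" where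
  "Hs n w k i = {G \<in> Sk n w (Suc k). \<not> sinkp G i}"

definition psi :: "nat \<Rightarrow> (nat \<times> nat) set \<Rightarrow> (nat \<times> nat) set \<times> nat" where
  "psi i G = (G - {(i, parf G i)}, parf G i)"

lemma lemB1:
  assumes diag: "\<forall>i\<in>{1..n}. w i i = 0" and iV: "i \<in> {1..n}"
    and Fm: "(F, m) \<in> PB n w k i"
  shows "insert (i, m) F \<in> Hs n w k i \<and> psi i (insert (i, m) F) = (F, m)
     \<and> Wt w (insert (i, m) F) * (of_bool (i = j) - of_bool (rootf (insert (i, m) F) i = j))
        = Tm w i j (F, m)"
proof -
  have F: "F \<subseteq> arcs n w" "okf F" "card F = k" and mV: "m \<in> {1..n}" "m \<noteq> i"
    and wm: "w i m > 0" and rmi: "rootf F m \<noteq> rootf F i" and sk: "sinkp F i"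
    using Fm unfolding PB_def Sk_iff by auto
  define G where "G = insert (i, m) F"
  have ri: "rootf F i = i" using root_eq[OF F(2)] sk by blast
  have mi: "(m, i) \<notin> F\<^sup>*" using root_diff_noreach[OF F(2) rmi] .
  have okG: "okf G" unfolding G_def using insert_ok[OF F(2) sk mi] .
  have fin: "finite F" using finite_arcs[OF F(1)] .
  have im: "(i, m) \<notin> F" using sk unfolding sinkp_def by auto
  have subG: "G \<subseteq> arcs n w" unfolding G_def using F(1) iV mV wm unfolding arcs_def by auto
  have cardG: "card G = Suc k" unfolding G_def using fin im F(3) by simp
  have nsG: "\<not> sinkp G i" unfolding G_def sinkp_def by auto
  have rG: "rootf G i = rootf F m" unfolding G_def using root_insert_i[OF F(2) sk mi] .
  have parG: "parf G i = m" using parf_eq[OF okG] unfolding G_def by auto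
  have "G - {(i, m)} = F" unfolding G_def using im by auto
  then have ps: "psi i G = (F, m)" unfolding psi_def using parG by simp
  have W: "Wt w G = w i m * Wt w F" unfolding G_def using Wt_insert[OF fin im] .
  have "Wt w G * (of_bool (i = j) - of_bool (rootf G i = j)) = Tm w i j (F, m)"
    unfolding Tm_def using W rG ri by simp
  moreover have "G \<in> Hs n w k i" unfolding Hs_def Sk_iff using subG okG cardG nsG by auto
  ultimately show ?thesis using ps unfolding G_def by simp
qed

lemma lemB2:
  assumes diag: "\<forall>i\<in>{1..n}. w i i = 0" and iV: "i \<in> {1..n}"
    and GH: "G \<in> Hs n w k i"
  shows "psi i G \<in> PB n w k i \<and> (case psi i G of (F, m) \<Rightarrow> insert (i, m) F) = G"
proof -
  have G: "G \<subseteq> arcs n w" "okf G" "card G = Suc k" and ns: "\<not> sinkp G i"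
    using GH unfolding Hs_def Sk_iff by auto
  define p where "p = parf G i"
  have ip: "(i, p) \<in> G" using parf_in[OF G(2) ns] p_def by simp
  have pf: "p \<in> {1..n} \<and> w i p > 0 \<and> i \<noteq> p"
    using arc_facts[where n=n and w=w, OF diag] ip G(1) by blast
  define F where "F = G - {(i, p)}"
  have okF: "okf F" and skF: "sinkp F i" using remove_ok[OF G(2) ip] F_def by auto
  have fin: "finite G" using finite_arcs[OF G(1)] .
  have subF: "F \<subseteq> arcs n w" unfolding F_def using G(1) by auto
  have cardF: "card F = k" unfolding F_def using fin ip G(3) by simp
  have ri: "rootf F i = i" using root_eq[OF okF] skF by blast
  have monoF: "F\<^sup>* \<subseteq> G\<^sup>*" unfolding F_def by (rule rtrancl_mono) auto
  have "rootf F p \<noteq> i"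
  proof
    assume "rootf F p = i"
    then have "(p, i) \<in> F\<^sup>*" using root_spec[OF okF, of p] by simp
    then show False using acyc[OF G(2) ip] monoF by blast
  qed
  then have inB: "(F, p) \<in> PB n w k i"
    unfolding PB_def Sk_iff using subF okF cardF pf ri skF by auto
  have "insert (i, p) F = G" unfolding F_def using ip by auto
  then show ?thesis using inB unfolding psi_def F_def p_def by simp
qed

lemma sumB:
  assumes diag: "\<forall>i\<in>{1..n}. w i i = 0" and iV: "i \<in> {1..n}"
  shows "sum (Tm w i j) (PB n w k i) =
    (\<Sum>G\<in>Hs n w k i. Wt w G * (of_bool (i = j) - of_bool (rootf G i = j)))"
proof (rule sum.reindex_bij_witness[where i = "psi i" and j = "\<lambda>(F, m). insert (i, m) F"])
  fix a assume a: "a \<in> PB n w k i"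
  obtain F m where am: "a = (F, m)" by (cases a)
  show "psi i (case a of (F, m) \<Rightarrow> insert (i, m) F) = a"
    "(case a of (F, m) \<Rightarrow> insert (i, m) F) \<in> Hs n w k i"
    "Wt w (case a of (F, m) \<Rightarrow> insert (i, m) F) *
       (of_bool (i = j) - of_bool (rootf (case a of (F, m) \<Rightarrow> insert (i, m) F) i = j)) =
     Tm w i j a"
    using lemB1[where n=n and w=w and k=k and j=j and F=F and m=m, OF diag iV] a am by auto
next
  fix b assume b: "b \<in> Hs n w k i"
  show "(case psi i b of (F, m) \<Rightarrow> insert (i, m) F) = b" "psi i b \<in> PB n w k i"
    using lemB2[where n=n and w=w and k=k, OF diag iV b] by auto
qed


lemma root_self_iff: "okf G \<Longrightarrow> rootf G i = i \<longleftrightarrow> sinkp G i"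
  using root_spec[of G i] root_eq[of G i i] by auto

lemma q_nonneg: "forest_matrix n w k i m \<ge> 0"
  unfolding q_eq by (rule sum_nonneg) (use Wt_nonneg Sk_iff in auto)

lemma gw_eq: "m \<noteq> i \<Longrightarrow> gamma_weights n w k i m = forest_matrix n w k i m"
  unfolding gamma_weights_def using q_nonneg[of n w k i m] by auto

lemma rhs_eq:
  assumes iV: "i \<in> {1..n}" and jV: "j \<in> {1..n}"
  shows "laplacian n (gamma_weights n w (Suc k)) i j =
    (\<Sum>G\<in>Sk n w (Suc k). if \<not> sinkp G i then Wt w G * (of_bool (i = j) - of_bool (rootf G i = j)) else 0)"
proof (cases "i = j")
  case True
  have "laplacian n (gamma_weights n w (Suc k)) i j =
      (\<Sum>m\<in>{1..n} - {i}. forest_matrix n w (Suc k) i m)"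
    unfolding laplacian_def using True gw_eq by simp
  also have "\<dots> = (\<Sum>m\<in>{1..n} - {i}. \<Sum>G\<in>Sk n w (Suc k). Wt w G * of_bool (rootf G i = m))"
    by (simp add: q_eq)
  also have "\<dots> = (\<Sum>G\<in>Sk n w (Suc k). \<Sum>m\<in>{1..n} - {i}. Wt w G * of_bool (rootf G i = m))"
    by (rule sum.swap)
  also have "\<dots> = (\<Sum>G\<in>Sk n w (Suc k). if rootf G i \<in> {1..n} - {i} then Wt w G else 0)"
    by (rule sum.cong) (auto simp: delta_sum)
  also have "\<dots> = (\<Sum>G\<in>Sk n w (Suc k). if \<not> sinkp G i then Wt w G * (of_bool (i = j) - of_bool (rootf G i = j)) else 0)"
  proof (rule sum.cong)
    fix G assume "G \<in> Sk n w (Suc k)"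
    then have G: "G \<subseteq> arcs n w" "okf G" using Sk_iff by auto
    have "rootf G i \<in> {1..n}" using reach_in_V[OF G(1) iV] root_spec[OF G(2), of i] by auto
    then show "(if rootf G i \<in> {1..n} - {i} then Wt w G else 0) =
      (if \<not> sinkp G i then Wt w G * (of_bool (i = j) - of_bool (rootf G i = j)) else 0)"
      using root_self_iff[OF G(2), of i] True by auto
  qed simp
  finally show ?thesis .
next
  case False
  have "laplacian n (gamma_weights n w (Suc k)) i j = - forest_matrix n w (Suc k) i j"
    unfolding laplacian_def using False gw_eq[of j i] by simp
  also have "\<dots> = (\<Sum>G\<in>Sk n w (Suc k). - (Wt w G * of_bool (rootf G i = j)))"
    by (simp add: q_eq sum_negf)
  also have "\<dots> = (\<Sum>G\<in>Sk n w (Suc k). if \<not> sinkp G i then Wt w G * (of_bool (i = j) - of_bool (rootf G i = j)) else 0)"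
  proof (rule sum.cong)
    fix G assume "G \<in> Sk n w (Suc k)"
    then have G: "G \<subseteq> arcs n w" "okf G" using Sk_iff by auto
    show "- (Wt w G * of_bool (rootf G i = j)) =
      (if \<not> sinkp G i then Wt w G * (of_bool (i = j) - of_bool (rootf G i = j)) else 0)"
      using root_self_iff[OF G(2), of i] False by auto
  qed simp
  finally show ?thesis .
qed

lemma lhs_eq:
  assumes iV: "i \<in> {1..n}"
  shows "(\<Sum>m\<in>{1..n}. laplacian n w i m * forest_matrix n w k m j) =
     sum (Tm w i j) (Sk n w k \<times> ({1..n} - {i}))"
proof -
  let ?q = "\<lambda>m. forest_matrix n w k m j"
  let ?V = "{1..n} - {i}"
  have "(\<Sum>m\<in>{1..n}. laplacian n w i m * ?q m) =
      laplacian n w i i * ?q i + (\<Sum>m\<in>?V. laplacian n w i m * ?q m)"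
    using iV by (subst sum.remove) auto
  also have "\<dots> = (\<Sum>m\<in>?V. w i m) * ?q i + (\<Sum>m\<in>?V. - (w i m * ?q m))"
    unfolding laplacian_def by simp
  also have "\<dots> = (\<Sum>m\<in>?V. w i m * (?q i - ?q m))"
  proof -
    have "(\<Sum>m\<in>?V. w i m * (?q i - ?q m)) = (\<Sum>m\<in>?V. w i m) * ?q i - (\<Sum>m\<in>?V. w i m * ?q m)"
      by (simp add: right_diff_distrib sum_subtractf sum_distrib_right)
    then show ?thesis by (simp add: sum_negf)
  qed
  also have "\<dots> = (\<Sum>m\<in>?V. \<Sum>F\<in>Sk n w k. Tm w i j (F, m))"
  proof (rule sum.cong)
    fix m
    show "w i m * (?q i - ?q m) = (\<Sum>F\<in>Sk n w k. Tm w i j (F, m))"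
      unfolding q_eq Tm_def
      by (simp add: sum_subtractf[symmetric] sum_distrib_left algebra_simps)
  qed simp
  also have "\<dots> = (\<Sum>F\<in>Sk n w k. \<Sum>m\<in>?V. Tm w i j (F, m))"
    by (rule sum.swap)
  also have "\<dots> = sum (Tm w i j) (Sk n w k \<times> ?V)"
    by (simp add: sum.cartesian_product)
  finally show ?thesis .
qed

lemma split_eq:
  assumes nonneg: "\<forall>i\<in>{1..n}. \<forall>j\<in>{1..n}. w i j \<ge> 0" and iV: "i \<in> {1..n}"
  shows "sum (Tm w i j) (Sk n w k \<times> ({1..n} - {i})) =
     sum (Tm w i j) (PB n w k i) + sum (Tm w i j) (PC n w k i)"
proof -
  let ?P = "Sk n w k \<times> ({1..n} - {i})"
  have finP: "finite ?P" using finite_Sk by auto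
  have sub: "PB n w k i \<union> PC n w k i \<subseteq> ?P" unfolding PB_def PC_def by auto
  have z: "Tm w i j p = 0" if "p \<in> ?P - (PB n w k i \<union> PC n w k i)" for p
  proof -
    obtain F m where pm: "p = (F, m)" by (cases p)
    have a: "F \<in> Sk n w k" "m \<in> {1..n}" "m \<noteq> i" using that pm by auto
    have "\<not> (w i m > 0 \<and> rootf F m \<noteq> rootf F i)"
      using that pm a unfolding PB_def PC_def by auto
    moreover have "w i m \<ge> 0" using nonneg iV a by auto
    ultimately have "w i m = 0 \<or> rootf F m = rootf F i" by auto
    then show ?thesis unfolding pm Tm_def by auto
  qed
  have "sum (Tm w i j) ?P = sum (Tm w i j) (PB n w k i \<union> PC n w k i)"
    using sum.mono_neutral_left[OF finP sub] z by metis
  also have "\<dots> = sum (Tm w i j) (PB n w k i) + sum (Tm w i j) (PC n w k i)"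
  proof (rule sum.union_disjoint)
    show "finite (PB n w k i)" using finite_subset[OF _ finP] sub by blast
    show "finite (PC n w k i)" using finite_subset[OF _ finP] sub by blast
    show "PB n w k i \<inter> PC n w k i = {}" unfolding PB_def PC_def by auto
  qed
  finally show ?thesis .
qed

theorem proposition5:
  fixes n :: nat and w :: "nat \<Rightarrow> nat \<Rightarrow> real" and k :: nat
  assumes "n > 1"
    and "\<forall>i\<in>{1..n}. \<forall>j\<in>{1..n}. w i j \<ge> 0"
    and "\<forall>i\<in>{1..n}. w i i = 0"
  shows "\<forall>i\<in>{1..n}. \<forall>j\<in>{1..n}.
           (\<Sum>m\<in>{1..n}. laplacian n w i m * forest_matrix n w k m j)
           = laplacian n (gamma_weights n w (k + 1)) i j"
proof (intro ballI)
  fix i j assume iV: "i \<in> {1..n}" and jV: "j \<in> {1..n}"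
  have "(\<Sum>m\<in>{1..n}. laplacian n w i m * forest_matrix n w k m j)
     = sum (Tm w i j) (PB n w k i) + sum (Tm w i j) (PC n w k i)"
    using lhs_eq[OF iV] split_eq[OF assms(2) iV] by simp
  also have "\<dots> = (\<Sum>G\<in>Hs n w k i. Wt w G * (of_bool (i = j) - of_bool (rootf G i = j)))"
    using sumB[where n=n and w=w, OF assms(3) iV] sumC_zero[where n=n and w=w, OF assms(3) iV] by simp
  also have "\<dots> = (\<Sum>G\<in>Sk n w (Suc k). if \<not> sinkp G i then Wt w G * (of_bool (i = j) - of_bool (rootf G i = j)) else 0)"
    unfolding Hs_def using finite_Sk by (rule sum.inter_filter)
  also have "\<dots> = laplacian n (gamma_weights n w (k + 1)) i j"
    using rhs_eq[OF iV jV] by simp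
  finally show "(\<Sum>m\<in>{1..n}. laplacian n w i m * forest_matrix n w k m j)
           = laplacian n (gamma_weights n w (k + 1)) i j" .
qed

end
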